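(* Let $(v^*,u^* )$ be the unique saddle point of $\min_v\max_u E(v,u)$ and let $L(v,u)=\frac{\alpha}{2}\sum_{s}|v_s-v^*_s|^2+\tau\sum_{s,a}\big(u^*_{sa}\log\frac{u^*_{sa}}{u_{sa}}+u_{sa}-u^*_{sa}\big)$. Consider the natural gradient ascent descent dynamics on $\mathbb{R}^{|S|}\times\mathbb{R}^{|S|\times|A|}_{>0}$: $$\frac{dv_{s'}}{dt}=-\Big(v_{s'}-\frac1\alpha\sum_{s,a}K_{ass'}u_{sa}\Big),\ s'\in S,\qquad \frac{du_{sa}}{dt}=-u_{sa}\Big(\log\frac{u_{sa}}{\tilde u_s}-\frac1\tau\Big(r_{sa}-\sum_{s'}K_{ass'}v_{s'}\Big)\Big),\ (s,a)\in S\times A.$$ Then $L$ is a Lyapunov function for this dynamics: $\frac{dL}{dt}\le 0$ along its trajectories, and the only trajectory of the dynamics along which $\frac{dL}{dt}=0$ is the constant trajectory $(v,u)=(v^*,u^* )$.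
   Context: Finite MDP: state space $S$, action space $A$, transition probabilities $P_{ass'}$ (with $\sum_{s'}P_{ass'}=1$), rewards $r_{sa}\ge0$, discount $\gamma\in(0,1)$, regularization $\tau>0$, and $\alpha>0$. $K_{ass'}=\delta_{ss'}-\gamma P_{ass'}$, $\tilde u_s=\sum_a u_{sa}$, and $E(v,u)=\frac{\alpha}{2}\sum_s v_s^2+\sum_{s,a}u_{sa}(r_{sa}-\sum_{s'}K_{ass'}v_{s'})-\tau\sum_{s,a}u_{sa}\log(u_{sa}/\tilde u_s)$. This min-max problem has a unique saddle point $(v^*,u^* )$ with $u^*_{sa}>0$. *)

theory Defs
  imports "HOL-Analysis.Analysis"
begin

text \<open>Finite MDP: states of type 's, actions of type 'a (both finite).
  Transition probabilities P a s s', rewards r s a, value v s, (unnormalised)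
  policy/occupation variable u s a.\<close>

definition Kmat :: "real \<Rightarrow> ('a \<Rightarrow> 's \<Rightarrow> 's \<Rightarrow> real) \<Rightarrow> 'a \<Rightarrow> 's \<Rightarrow> 's \<Rightarrow> real" where
  "Kmat \<gamma> P a s s' = (if s = s' then 1 else 0) - \<gamma> * P a s s'"

definition utilde :: "('s \<Rightarrow> 'a::finite \<Rightarrow> real) \<Rightarrow> 's \<Rightarrow> real" where
  "utilde u s = (\<Sum>a\<in>UNIV. u s a)"

definition Efun :: "real \<Rightarrow> real \<Rightarrow> real \<Rightarrow> ('a::finite \<Rightarrow> 's::finite \<Rightarrow> 's \<Rightarrow> real)
    \<Rightarrow> ('s \<Rightarrow> 'a \<Rightarrow> real) \<Rightarrow> ('s \<Rightarrow> real) \<Rightarrow> ('s \<Rightarrow> 'a \<Rightarrow> real) \<Rightarrow> real" where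
  "Efun \<alpha> \<tau> \<gamma> P r v u =
     \<alpha> / 2 * (\<Sum>s\<in>UNIV. (v s)\<^sup>2)
     + (\<Sum>s\<in>UNIV. \<Sum>a\<in>UNIV. u s a * (r s a - (\<Sum>s'\<in>UNIV. Kmat \<gamma> P a s s' * v s')))
     - \<tau> * (\<Sum>s\<in>UNIV. \<Sum>a\<in>UNIV. u s a * ln (u s a / utilde u s))"

definition is_saddle :: "real \<Rightarrow> real \<Rightarrow> real \<Rightarrow> ('a::finite \<Rightarrow> 's::finite \<Rightarrow> 's \<Rightarrow> real)
    \<Rightarrow> ('s \<Rightarrow> 'a \<Rightarrow> real) \<Rightarrow> ('s \<Rightarrow> real) \<Rightarrow> ('s \<Rightarrow> 'a \<Rightarrow> real) \<Rightarrow> bool" where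
  "is_saddle \<alpha> \<tau> \<gamma> P r vs us \<longleftrightarrow>
     (\<forall>s a. 0 < us s a) \<and>
     (\<forall>u. (\<forall>s a. 0 < u s a) \<longrightarrow> Efun \<alpha> \<tau> \<gamma> P r vs u \<le> Efun \<alpha> \<tau> \<gamma> P r vs us) \<and>
     (\<forall>v. Efun \<alpha> \<tau> \<gamma> P r vs us \<le> Efun \<alpha> \<tau> \<gamma> P r v us)"

definition Lyap :: "real \<Rightarrow> real \<Rightarrow> ('s::finite \<Rightarrow> real) \<Rightarrow> ('s \<Rightarrow> 'a::finite \<Rightarrow> real)
    \<Rightarrow> ('s \<Rightarrow> real) \<Rightarrow> ('s \<Rightarrow> 'a \<Rightarrow> real) \<Rightarrow> real" where
  "Lyap \<alpha> \<tau> vs us v u =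
     \<alpha> / 2 * (\<Sum>s\<in>UNIV. \<bar>v s - vs s\<bar>\<^sup>2)
     + \<tau> * (\<Sum>s\<in>UNIV. \<Sum>a\<in>UNIV. us s a * ln (us s a / u s a) + u s a - us s a)"

end

theory Submission
  imports Defs
begin

lemma f_nonneg:
  fixes p q :: real assumes "0 < p" "0 < q"
  shows "0 \<le> p * (ln p - ln q) - p + q"
proof -
  have "ln (q/p) \<le> q/p - 1" using assms by (intro ln_le_minus_one) simp
  hence "p * ln (q/p) \<le> p * (q/p - 1)" using assms by (intro mult_left_mono) auto
  thus ?thesis using assms by (simp add: ln_div algebra_simps)
qed

lemma f_zero:
  fixes p q :: real assumes "0 < p" "0 < q" "p * (ln p - ln q) - p + q = 0"
  shows "p = q"
proof -
  have "p * ln (q/p) = p * (q/p - 1)" using assms by (simp add: ln_div algebra_simps)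
  hence "ln (q/p) = q/p - 1" using assms by simp
  hence "q/p = 1" using assms by (intro ln_eq_minus_one) auto
  thus ?thesis using assms by simp
qed

lemma kl_lemma:
  fixes u w :: "'a::finite \<Rightarrow> real"
  assumes u: "\<And>a. 0 < u a" and w: "\<And>a. 0 < w a"
  defines "U \<equiv> (\<Sum>a\<in>UNIV. u a)" and "W \<equiv> (\<Sum>a\<in>UNIV. w a)"
  shows "0 \<le> (\<Sum>a\<in>UNIV. (u a - w a) * (ln (u a / U) - ln (w a / W)))"
    and "(\<Sum>a\<in>UNIV. (u a - w a) * (ln (u a / U) - ln (w a / W))) = 0 \<Longrightarrow> (\<forall>a. u a / U = w a / W)"
proof -
  have U: "0 < U" unfolding U_def using u by (intro sum_pos) auto
  have W: "0 < W" unfolding W_def using w by (intro sum_pos) auto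
  define p where "p a = u a / U" for a
  define q where "q a = w a / W" for a
  have p: "0 < p a" for a using u U by (simp add: p_def)
  have q: "0 < q a" for a using w W by (simp add: q_def)
  have sp: "(\<Sum>a\<in>UNIV. p a) = 1" using U unfolding p_def U_def by (simp add: sum_divide_distrib[symmetric])
  have sq: "(\<Sum>a\<in>UNIV. q a) = 1" using W unfolding q_def W_def by (simp add: sum_divide_distrib[symmetric])
  define f where "f x y = x * (ln x - ln y) - x + y" for x y :: real
  have pt: "(u a - w a) * (ln (u a / U) - ln (w a / W))
      = U * f (p a) (q a) + W * f (q a) (p a) + (U - W) * (p a - q a)" for a
  proof -
    have "u a = U * p a" "w a = W * q a" using U W by (auto simp: p_def q_def)
    thus ?thesis unfolding f_def p_def[symmetric] q_def[symmetric] by (simp add: algebra_simps)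
  qed
  have "(\<Sum>a\<in>UNIV. (U - W) * (p a - q a)) = 0"
    by (simp add: sum_distrib_left[symmetric] sum_subtractf sp sq)
  hence G: "(\<Sum>a\<in>UNIV. (u a - w a) * (ln (u a / U) - ln (w a / W)))
     = (\<Sum>a\<in>UNIV. U * f (p a) (q a) + W * f (q a) (p a))"
    by (simp add: pt sum.distrib)
  have fn: "0 \<le> f x y" if "0 < x" "0 < y" for x y using f_nonneg[OF that] by (simp add: f_def)
  have tn: "0 \<le> U * f (p a) (q a) + W * f (q a) (p a)" for a
    using fn[OF p q] fn[OF q p] U W by (simp add: add_nonneg_nonneg)
  show "0 \<le> (\<Sum>a\<in>UNIV. (u a - w a) * (ln (u a / U) - ln (w a / W)))"
    unfolding G by (intro sum_nonneg tn)
  assume "(\<Sum>a\<in>UNIV. (u a - w a) * (ln (u a / U) - ln (w a / W))) = 0"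
  hence "\<forall>a\<in>UNIV. U * f (p a) (q a) + W * f (q a) (p a) = 0"
    unfolding G using tn by (subst sum_nonneg_eq_0_iff[symmetric]) auto
  show "\<forall>a. u a / U = w a / W"
  proof
    fix a
    have "U * f (p a) (q a) + W * f (q a) (p a) = 0" using \<open>\<forall>a\<in>UNIV. _\<close> by auto
    moreover have "0 \<le> U * f (p a) (q a)" "0 \<le> W * f (q a) (p a)" using fn[OF p q] fn[OF q p] U W by auto
    ultimately have "f (p a) (q a) = 0" using U by (simp add: add_nonneg_eq_0_iff)
    hence "p a = q a" using f_zero[OF p q] by (simp add: f_def)
    thus "u a / U = w a / W" by (simp add: p_def q_def)
  qed
qed

lemma contraction:
  fixes d :: "'s::finite \<Rightarrow> real" and M :: "'s \<Rightarrow> 's \<Rightarrow> real"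
  assumes M: "\<And>s s'. 0 \<le> M s s'" "\<And>s. (\<Sum>s'\<in>UNIV. M s s') = 1"
    and g: "0 \<le> \<gamma>" "\<gamma> < 1"
    and eq: "\<And>s'. d s' = \<gamma> * (\<Sum>s\<in>UNIV. d s * M s s')"
  shows "d = (\<lambda>_. 0)"
proof -
  have "(\<Sum>s'\<in>UNIV. \<bar>d s'\<bar>) \<le> (\<Sum>s'\<in>UNIV. \<gamma> * (\<Sum>s\<in>UNIV. \<bar>d s\<bar> * M s s'))"
  proof (intro sum_mono)
    fix s'
    have "\<bar>d s'\<bar> = \<gamma> * \<bar>\<Sum>s\<in>UNIV. d s * M s s'\<bar>" using g by (subst eq) (simp add: abs_mult)
    also have "\<dots> \<le> \<gamma> * (\<Sum>s\<in>UNIV. \<bar>d s\<bar> * M s s')"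
      using g M by (intro mult_left_mono order_trans[OF sum_abs]) (auto simp: abs_mult)
    finally show "\<bar>d s'\<bar> \<le> \<gamma> * (\<Sum>s\<in>UNIV. \<bar>d s\<bar> * M s s')" .
  qed
  also have "\<dots> = \<gamma> * (\<Sum>s'\<in>UNIV. \<Sum>s\<in>UNIV. \<bar>d s\<bar> * M s s')"
    by (simp add: sum_distrib_left)
  also have "\<dots> = \<gamma> * (\<Sum>s\<in>UNIV. \<Sum>s'\<in>UNIV. \<bar>d s\<bar> * M s s')"
    by (subst sum.swap) (rule refl)
  also have "\<dots> = \<gamma> * (\<Sum>s\<in>UNIV. \<bar>d s\<bar> * (\<Sum>s'\<in>UNIV. M s s'))"
    by (simp add: sum_distrib_left)
  also have "\<dots> = \<gamma> * (\<Sum>s\<in>UNIV. \<bar>d s\<bar>)" using M by simp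
  finally have "(1 - \<gamma>) * (\<Sum>s\<in>UNIV. \<bar>d s\<bar>) \<le> 0" by (simp add: algebra_simps)
  hence "(\<Sum>s\<in>UNIV. \<bar>d s\<bar>) \<le> 0" using g by (simp add: mult_le_0_iff)
  hence "(\<Sum>s\<in>UNIV. \<bar>d s\<bar>) = 0" by (simp add: antisym sum_nonneg)
  hence "\<forall>s\<in>UNIV. \<bar>d s\<bar> = 0" by (subst sum_nonneg_eq_0_iff[symmetric]) auto
  thus ?thesis by auto
qed


lemma stat_v:
  fixes P :: "'a::finite \<Rightarrow> 's::finite \<Rightarrow> 's \<Rightarrow> real"
  assumes saddle: "is_saddle \<alpha> \<tau> \<gamma> P r vs us" and alpha: "0 < \<alpha>"
  shows "\<alpha> * vs s' = (\<Sum>s\<in>UNIV. \<Sum>a\<in>UNIV. Kmat \<gamma> P a s s' * us s a)"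
proof -
  define c where "c = (\<Sum>s\<in>UNIV. \<Sum>a\<in>UNIV. Kmat \<gamma> P a s s' * us s a)"
  define vh where "vh h = (\<lambda>x. vs x + (if x = s' then h else 0))" for h :: real
  define \<phi> where "\<phi> h = \<alpha>/2 * ((vs s' + h)\<^sup>2 - (vs s')\<^sup>2) - h * c" for h
  have E: "Efun \<alpha> \<tau> \<gamma> P r (vh h) us = Efun \<alpha> \<tau> \<gamma> P r vs us + \<phi> h" for h
  proof -
    have 1: "(\<Sum>x\<in>UNIV. (vh h x)\<^sup>2) = (\<Sum>x\<in>UNIV. (vs x)\<^sup>2) + ((vs s' + h)\<^sup>2 - (vs s')\<^sup>2)"
    proof -
      have "(\<Sum>x\<in>UNIV. (vh h x)\<^sup>2) = (\<Sum>x\<in>UNIV. (vs x)\<^sup>2 + (if x = s' then (vs s' + h)\<^sup>2 - (vs s')\<^sup>2 else 0))"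
        by (intro sum.cong) (auto simp: vh_def)
      thus ?thesis by (simp add: sum.distrib)
    qed
    have 2: "(\<Sum>x\<in>UNIV. Kmat \<gamma> P a s x * vh h x) = (\<Sum>x\<in>UNIV. Kmat \<gamma> P a s x * vs x) + h * Kmat \<gamma> P a s s'" for a s
    proof -
      have "(\<Sum>x\<in>UNIV. Kmat \<gamma> P a s x * vh h x) = (\<Sum>x\<in>UNIV. Kmat \<gamma> P a s x * vs x + (if x = s' then h * Kmat \<gamma> P a s s' else 0))"
        by (intro sum.cong) (auto simp: vh_def algebra_simps)
      thus ?thesis by (simp add: sum.distrib)
    qed
    have 3: "(\<Sum>s\<in>UNIV. \<Sum>a\<in>UNIV. us s a * (r s a - (\<Sum>x\<in>UNIV. Kmat \<gamma> P a s x * vh h x)))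
       = (\<Sum>s\<in>UNIV. \<Sum>a\<in>UNIV. us s a * (r s a - (\<Sum>x\<in>UNIV. Kmat \<gamma> P a s x * vs x))) - h * c"
      unfolding 2 c_def
      by (simp add: algebra_simps sum.distrib sum_subtractf sum_distrib_left)
    show ?thesis unfolding Efun_def 1 3 \<phi>_def by (simp add: algebra_simps)
  qed
  have vh0: "vh 0 = vs" by (simp add: vh_def)
  have "\<forall>h. \<bar>0 - h\<bar> < 1 \<longrightarrow> \<phi> 0 \<le> \<phi> h"
  proof (intro allI impI)
    fix h
    have "Efun \<alpha> \<tau> \<gamma> P r vs us \<le> Efun \<alpha> \<tau> \<gamma> P r (vh h) us" using saddle by (simp add: is_saddle_def)
    thus "\<phi> 0 \<le> \<phi> h" using E[of h] by (simp add: \<phi>_def)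
  qed
  moreover have "(\<phi> has_real_derivative (\<alpha> * vs s' - c)) (at 0)"
    unfolding \<phi>_def[abs_def] by (rule derivative_eq_intros refl)+ (simp add: algebra_simps)
  ultimately have "\<alpha> * vs s' - c = 0" by (metis DERIV_local_min zero_less_one)
  thus ?thesis by (simp add: c_def)
qed

lemma Hsplit:
  fixes u :: "'s::finite \<Rightarrow> 'a::finite \<Rightarrow> real"
  assumes "\<And>s a. 0 < u s a"
  shows "(\<Sum>s\<in>UNIV. \<Sum>a\<in>UNIV. u s a * ln (u s a / utilde u s))
     = (\<Sum>s\<in>UNIV. \<Sum>a\<in>UNIV. u s a * ln (u s a)) - (\<Sum>s\<in>UNIV. utilde u s * ln (utilde u s))"
proof -
  have pos: "0 < utilde u s" for s unfolding utilde_def using assms by (intro sum_pos) auto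
  have "(\<Sum>a\<in>UNIV. u s a * ln (u s a / utilde u s)) = (\<Sum>a\<in>UNIV. u s a * ln (u s a)) - utilde u s * ln (utilde u s)" for s
  proof -
    have "(\<Sum>a\<in>UNIV. u s a * ln (u s a / utilde u s)) = (\<Sum>a\<in>UNIV. u s a * ln (u s a) - u s a * ln (utilde u s))"
      using assms pos by (intro sum.cong refl) (simp add: ln_div less_imp_neq[OF assms, symmetric] less_imp_neq[OF pos, symmetric] algebra_simps)
    thus ?thesis by (simp add: sum_subtractf sum_distrib_right[symmetric] utilde_def)
  qed
  thus ?thesis by (simp add: sum_subtractf)
qed

lemma stat_u:
  fixes P :: "'a::finite \<Rightarrow> 's::finite \<Rightarrow> 's \<Rightarrow> real"
  assumes saddle: "is_saddle \<alpha> \<tau> \<gamma> P r vs us" and tau: "0 < \<tau>"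
  shows "\<tau> * ln (us s0 a0 / utilde us s0) = r s0 a0 - (\<Sum>s'\<in>UNIV. Kmat \<gamma> P a0 s0 s' * vs s')"
proof -
  have upos: "\<And>s a. 0 < us s a" using saddle by (simp add: is_saddle_def)
  define Q where "Q s a = r s a - (\<Sum>s'\<in>UNIV. Kmat \<gamma> P a s s' * vs s')" for s a
  define x where "x = us s0 a0"
  define y where "y = utilde us s0"
  have x: "0 < x" using upos by (simp add: x_def)
  have xy: "x \<le> y" unfolding x_def y_def utilde_def
    using upos by (intro member_le_sum) (auto intro: less_imp_le)
  define uh where "uh h = (\<lambda>s b. us s b + (if s = s0 \<and> b = a0 then h else 0))" for h :: real
  define \<phi> where "\<phi> h = h * Q s0 a0 - \<tau> * (((x+h) * ln (x+h) - x * ln x) - ((y+h) * ln (y+h) - y * ln y))" for h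
  have E: "Efun \<alpha> \<tau> \<gamma> P r vs (uh h) = Efun \<alpha> \<tau> \<gamma> P r vs us + \<phi> h" if h: "\<bar>h\<bar> < x" for h
  proof -
    have uhpos: "0 < uh h s b" for s b using upos[of s b] h by (auto simp: uh_def x_def)
    have 1: "(\<Sum>s\<in>UNIV. \<Sum>a\<in>UNIV. uh h s a * Q s a) = (\<Sum>s\<in>UNIV. \<Sum>a\<in>UNIV. us s a * Q s a) + h * Q s0 a0"
    proof -
      have "(\<Sum>s\<in>UNIV. \<Sum>a\<in>UNIV. uh h s a * Q s a) = (\<Sum>s\<in>UNIV. (\<Sum>a\<in>UNIV. us s a * Q s a) + (if s = s0 then h * Q s0 a0 else 0))"
      proof (intro sum.cong refl)
        fix s
        have "(\<Sum>a\<in>UNIV. uh h s a * Q s a) = (\<Sum>a\<in>UNIV. us s a * Q s a + (if s = s0 \<and> a = a0 then h * Q s0 a0 else 0))"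
          by (intro sum.cong) (auto simp: uh_def algebra_simps)
        thus "(\<Sum>a\<in>UNIV. uh h s a * Q s a) = (\<Sum>a\<in>UNIV. us s a * Q s a) + (if s = s0 then h * Q s0 a0 else 0)"
          by (simp add: sum.distrib)
      qed
      thus ?thesis by (simp add: sum.distrib)
    qed
    have 2: "(\<Sum>s\<in>UNIV. \<Sum>a\<in>UNIV. uh h s a * ln (uh h s a)) = (\<Sum>s\<in>UNIV. \<Sum>a\<in>UNIV. us s a * ln (us s a)) + ((x+h) * ln (x+h) - x * ln x)"
    proof -
      have "(\<Sum>s\<in>UNIV. \<Sum>a\<in>UNIV. uh h s a * ln (uh h s a)) = (\<Sum>s\<in>UNIV. (\<Sum>a\<in>UNIV. us s a * ln (us s a)) + (if s = s0 then ((x+h) * ln (x+h) - x * ln x) else 0))"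
      proof (intro sum.cong refl)
        fix s
        have "(\<Sum>a\<in>UNIV. uh h s a * ln (uh h s a)) = (\<Sum>a\<in>UNIV. us s a * ln (us s a) + (if s = s0 \<and> a = a0 then ((x+h) * ln (x+h) - x * ln x) else 0))"
          by (intro sum.cong) (auto simp: uh_def x_def algebra_simps)
        thus "(\<Sum>a\<in>UNIV. uh h s a * ln (uh h s a)) = (\<Sum>a\<in>UNIV. us s a * ln (us s a)) + (if s = s0 then ((x+h) * ln (x+h) - x * ln x) else 0)"
          by (simp add: sum.distrib)
      qed
      thus ?thesis by (simp add: sum.distrib)
    qed
    have ut: "utilde (uh h) s = utilde us s + (if s = s0 then h else 0)" for s
      unfolding utilde_def uh_def by (simp add: sum.distrib)
    have 3: "(\<Sum>s\<in>UNIV. utilde (uh h) s * ln (utilde (uh h) s)) = (\<Sum>s\<in>UNIV. utilde us s * ln (utilde us s)) + ((y+h) * ln (y+h) - y * ln y)"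
    proof -
      have "(\<Sum>s\<in>UNIV. utilde (uh h) s * ln (utilde (uh h) s)) = (\<Sum>s\<in>UNIV. utilde us s * ln (utilde us s) + (if s = s0 then ((y+h) * ln (y+h) - y * ln y) else 0))"
        by (intro sum.cong) (auto simp: ut y_def)
      thus ?thesis by (simp add: sum.distrib)
    qed
    show ?thesis unfolding Efun_def Hsplit[OF uhpos] Hsplit[OF upos] Q_def[symmetric] 1 2 3 \<phi>_def
      by (simp add: algebra_simps)
  qed
  have "\<forall>h. \<bar>0 - h\<bar> < x \<longrightarrow> \<phi> h \<le> \<phi> 0"
  proof (intro allI impI)
    fix h assume h: "\<bar>0 - h\<bar> < x"
    have uhpos: "\<forall>s b. 0 < uh h s b" using upos h by (auto simp: uh_def x_def add_pos_pos)
    have "Efun \<alpha> \<tau> \<gamma> P r vs (uh h) \<le> Efun \<alpha> \<tau> \<gamma> P r vs us" using saddle uhpos by (simp add: is_saddle_def)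
    thus "\<phi> h \<le> \<phi> 0" using E[of h] h by (simp add: \<phi>_def)
  qed
  moreover have "(\<phi> has_real_derivative (Q s0 a0 - \<tau> * (ln x - ln y))) (at 0)"
    unfolding \<phi>_def[abs_def]
    by (rule derivative_eq_intros refl | use x xy in simp)+
  ultimately have "Q s0 a0 - \<tau> * (ln x - ln y) = 0" using x by (metis DERIV_local_max)
  moreover have "ln (us s0 a0 / utilde us s0) = ln x - ln y" using x xy by (simp add: x_def y_def ln_div)
  ultimately show ?thesis by (simp add: Q_def)
qed


lemma cross:
  fixes K :: "'a::finite \<Rightarrow> 's::finite \<Rightarrow> 's \<Rightarrow> real"
  shows "(\<Sum>s'\<in>UNIV. x s' * (\<Sum>s\<in>UNIV. \<Sum>a\<in>UNIV. K a s s' * y s a))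
       = (\<Sum>s\<in>UNIV. \<Sum>a\<in>UNIV. y s a * (\<Sum>s'\<in>UNIV. K a s s' * x s'))"
proof -
  have "(\<Sum>s'\<in>UNIV. x s' * (\<Sum>s\<in>UNIV. \<Sum>a\<in>UNIV. K a s s' * y s a))
      = (\<Sum>s'\<in>UNIV. \<Sum>s\<in>UNIV. \<Sum>a\<in>UNIV. K a s s' * x s' * y s a)"
    by (simp add: sum_distrib_left mult_ac)
  also have "\<dots> = (\<Sum>s\<in>UNIV. \<Sum>s'\<in>UNIV. \<Sum>a\<in>UNIV. K a s s' * x s' * y s a)"
    by (rule sum.swap)
  also have "\<dots> = (\<Sum>s\<in>UNIV. \<Sum>a\<in>UNIV. \<Sum>s'\<in>UNIV. K a s s' * x s' * y s a)"
    by (intro sum.cong refl sum.swap)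
  also have "\<dots> = (\<Sum>s\<in>UNIV. \<Sum>a\<in>UNIV. y s a * (\<Sum>s'\<in>UNIV. K a s s' * x s'))"
    by (simp add: sum_distrib_left mult_ac)
  finally show ?thesis .
qed

lemma Didentity:
  fixes K :: "'a::finite \<Rightarrow> 's::finite \<Rightarrow> 's \<Rightarrow> real" and u us :: "'s \<Rightarrow> 'a \<Rightarrow> real"
  assumes alpha: "0 < \<alpha>" and tau: "0 < \<tau>" and upos: "\<And>s a. 0 < u s a"
    and vstat: "\<And>s'. \<alpha> * vs s' = (\<Sum>s\<in>UNIV. \<Sum>a\<in>UNIV. K a s s' * us s a)"
    and ustat: "\<And>s a. \<tau> * ln (us s a / utilde us s) = r s a - (\<Sum>s'\<in>UNIV. K a s s' * vs s')"
  shows "\<alpha> / 2 * (\<Sum>s'\<in>UNIV. 2 * (v s' - vs s') * (- (v s' - 1 / \<alpha> * (\<Sum>s\<in>UNIV. \<Sum>a\<in>UNIV. K a s s' * u s a))))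
     + \<tau> * (\<Sum>s\<in>UNIV. \<Sum>a\<in>UNIV. (1 - us s a / u s a) * (- u s a * (ln (u s a / utilde u s)
             - 1 / \<tau> * (r s a - (\<Sum>s'\<in>UNIV. K a s s' * v s')))))
   = - \<alpha> * (\<Sum>s\<in>UNIV. (v s - vs s)\<^sup>2)
     - \<tau> * (\<Sum>s\<in>UNIV. \<Sum>a\<in>UNIV. (u s a - us s a) * (ln (u s a / utilde u s) - ln (us s a / utilde us s)))"
proof -
  define KT where "KT w s' = (\<Sum>s\<in>UNIV. \<Sum>a\<in>UNIV. K a s s' * w s a)" for w :: "'s \<Rightarrow> 'a \<Rightarrow> real" and s'
  define Kv where "Kv w s a = (\<Sum>s'\<in>UNIV. K a s s' * w s')" for w :: "'s \<Rightarrow> real" and s a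
  have A: "\<alpha> / 2 * (2 * (v s' - vs s') * (- (v s' - 1 / \<alpha> * KT u s')))
     = - \<alpha> * (v s' - vs s')\<^sup>2 + (v s' - vs s') * (KT u s' - KT us s')" for s'
  proof -
    have "KT us s' = \<alpha> * vs s'" using vstat by (simp add: KT_def)
    thus ?thesis using alpha by (simp add: field_simps power2_eq_square)
  qed
  have B: "\<tau> * ((1 - us s a / u s a) * (- u s a * (ln (u s a / utilde u s) - 1 / \<tau> * (r s a - Kv v s a))))
     = - \<tau> * ((u s a - us s a) * (ln (u s a / utilde u s) - ln (us s a / utilde us s)))
       - (u s a - us s a) * (Kv v s a - Kv vs s a)" for s a
  proof -
    have e: "\<tau> * ln (us s a / utilde us s) = r s a - Kv vs s a" using ustat by (simp add: Kv_def)
    have "\<tau> * ((1 - us s a / u s a) * (- u s a * (ln (u s a / utilde u s) - 1 / \<tau> * (r s a - Kv v s a))))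
       = - (u s a - us s a) * (\<tau> * ln (u s a / utilde u s) - (r s a - Kv v s a))"
      using tau upos[of s a] by (simp add: field_simps)
    also have "\<dots> = - (u s a - us s a) * (\<tau> * ln (u s a / utilde u s) - \<tau> * ln (us s a / utilde us s) + (Kv v s a - Kv vs s a))"
      using e by simp
    finally show ?thesis by (simp add: algebra_simps)
  qed
  have KTd: "KT u s' - KT us s' = (\<Sum>s\<in>UNIV. \<Sum>a\<in>UNIV. K a s s' * (u s a - us s a))" for s'
    by (simp add: KT_def sum_subtractf right_diff_distrib)
  have Kvd: "Kv v s a - Kv vs s a = (\<Sum>s'\<in>UNIV. K a s s' * (v s' - vs s'))" for s a
    by (simp add: Kv_def sum_subtractf right_diff_distrib)
  have C: "(\<Sum>s'\<in>UNIV. (v s' - vs s') * (KT u s' - KT us s'))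
      = (\<Sum>s\<in>UNIV. \<Sum>a\<in>UNIV. (u s a - us s a) * (Kv v s a - Kv vs s a))"
    unfolding KTd Kvd by (rule cross)
  have "\<alpha> / 2 * (\<Sum>s'\<in>UNIV. 2 * (v s' - vs s') * (- (v s' - 1 / \<alpha> * KT u s')))
     + \<tau> * (\<Sum>s\<in>UNIV. \<Sum>a\<in>UNIV. (1 - us s a / u s a) * (- u s a * (ln (u s a / utilde u s)
             - 1 / \<tau> * (r s a - Kv v s a))))
     = (\<Sum>s'\<in>UNIV. \<alpha> / 2 * (2 * (v s' - vs s') * (- (v s' - 1 / \<alpha> * KT u s'))))
     + (\<Sum>s\<in>UNIV. \<Sum>a\<in>UNIV. \<tau> * ((1 - us s a / u s a) * (- u s a * (ln (u s a / utilde u s)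
             - 1 / \<tau> * (r s a - Kv v s a)))))"
    by (simp add: sum_distrib_left)
  also have "\<dots> = (\<Sum>s'\<in>UNIV. - \<alpha> * (v s' - vs s')\<^sup>2 + (v s' - vs s') * (KT u s' - KT us s'))
     + (\<Sum>s\<in>UNIV. \<Sum>a\<in>UNIV. - \<tau> * ((u s a - us s a) * (ln (u s a / utilde u s) - ln (us s a / utilde us s)))
       - (u s a - us s a) * (Kv v s a - Kv vs s a))"
    unfolding A B ..
  also have "\<dots> = - \<alpha> * (\<Sum>s\<in>UNIV. (v s - vs s)\<^sup>2)
     - \<tau> * (\<Sum>s\<in>UNIV. \<Sum>a\<in>UNIV. (u s a - us s a) * (ln (u s a / utilde u s) - ln (us s a / utilde us s)))"
    using C by (simp add: sum.distrib sum_subtractf sum_distrib_left sum_negf)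
  finally show ?thesis by (simp add: KT_def Kv_def)
qed


lemma fixed:
  fixes P :: "'a::finite \<Rightarrow> 's::finite \<Rightarrow> 's \<Rightarrow> real" and u us :: "'s \<Rightarrow> 'a \<Rightarrow> real"
  assumes P_nonneg: "\<And>a s s'. 0 \<le> P a s s'"
    and P_sum: "\<And>a s. (\<Sum>s'\<in>UNIV. P a s s') = 1"
    and g: "0 \<le> \<gamma>" "\<gamma> < 1"
    and uspos: "\<And>s a. 0 < us s a" and upos: "\<And>s a. 0 < u s a"
    and pol: "\<And>s a. u s a / utilde u s = us s a / utilde us s"
    and kt: "\<And>s'. (\<Sum>s\<in>UNIV. \<Sum>a\<in>UNIV. Kmat \<gamma> P a s s' * u s a) = (\<Sum>s\<in>UNIV. \<Sum>a\<in>UNIV. Kmat \<gamma> P a s s' * us s a)"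
  shows "u = us"
proof -
  have Up: "0 < utilde u s" for s unfolding utilde_def using upos by (intro sum_pos) auto
  have Usp: "0 < utilde us s" for s unfolding utilde_def using uspos by (intro sum_pos) auto
  define d where "d s = utilde u s - utilde us s" for s
  define \<pi> where "\<pi> s a = us s a / utilde us s" for s a
  have \<pi>1: "(\<Sum>a\<in>UNIV. \<pi> s a) = 1" for s
    using Usp[of s] by (simp add: \<pi>_def sum_divide_distrib[symmetric] utilde_def)
  have \<pi>0: "0 \<le> \<pi> s a" for s a using uspos[of s a] Usp[of s] by (simp add: \<pi>_def)
  have ud: "u s a - us s a = d s * \<pi> s a" for s a
  proof -
    have "u s a = utilde u s * \<pi> s a" using pol[of s a] Up[of s] unfolding \<pi>_def by (simp add: field_simps)
    moreover have "us s a = utilde us s * \<pi> s a" using Usp[of s] unfolding \<pi>_def by simp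
    ultimately show ?thesis by (simp add: d_def algebra_simps)
  qed
  define M where "M s s' = (\<Sum>a\<in>UNIV. \<pi> s a * P a s s')" for s s'
  have M0: "0 \<le> M s s'" for s s' unfolding M_def using \<pi>0 P_nonneg by (intro sum_nonneg mult_nonneg_nonneg)
  have M1: "(\<Sum>s'\<in>UNIV. M s s') = 1" for s
  proof -
    have "(\<Sum>s'\<in>UNIV. M s s') = (\<Sum>s'\<in>UNIV. \<Sum>a\<in>UNIV. \<pi> s a * P a s s')"
      by (simp add: M_def)
    also have "\<dots> = (\<Sum>a\<in>UNIV. \<Sum>s'\<in>UNIV. \<pi> s a * P a s s')"
      by (rule sum.swap)
    also have "\<dots> = (\<Sum>a\<in>UNIV. \<pi> s a * (\<Sum>s'\<in>UNIV. P a s s'))"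
      by (simp add: sum_distrib_left)
    finally have "(\<Sum>s'\<in>UNIV. M s s') = (\<Sum>a\<in>UNIV. \<pi> s a * (\<Sum>s'\<in>UNIV. P a s s'))" .
    thus ?thesis using P_sum \<pi>1 by simp
  qed
  have eq: "d s' = \<gamma> * (\<Sum>s\<in>UNIV. d s * M s s')" for s'
  proof -
    have "0 = (\<Sum>s\<in>UNIV. \<Sum>a\<in>UNIV. Kmat \<gamma> P a s s' * (u s a - us s a))"
      using kt[of s'] by (simp add: sum_subtractf right_diff_distrib)
    also have "\<dots> = (\<Sum>s\<in>UNIV. \<Sum>a\<in>UNIV. (if s = s' then d s * \<pi> s a else 0) - \<gamma> * (d s * (\<pi> s a * P a s s')))"
      unfolding ud Kmat_def by (intro sum.cong refl) (simp add: algebra_simps)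
    also have "\<dots> = (\<Sum>s\<in>UNIV. \<Sum>a\<in>UNIV. (if s = s' then d s * \<pi> s a else 0)) - (\<Sum>s\<in>UNIV. \<Sum>a\<in>UNIV. \<gamma> * (d s * (\<pi> s a * P a s s')))"
      by (simp only: sum_subtractf)
    also have "(\<Sum>s\<in>UNIV. \<Sum>a\<in>UNIV. (if s = s' then d s * \<pi> s a else 0)) = (\<Sum>s\<in>UNIV. (if s = s' then (\<Sum>a\<in>UNIV. d s * \<pi> s a) else 0))"
      by (intro sum.cong refl) auto
    also have "\<dots> = d s' * (\<Sum>a\<in>UNIV. \<pi> s' a)" by (simp add: sum_distrib_left)
    also have "(\<Sum>s\<in>UNIV. \<Sum>a\<in>UNIV. \<gamma> * (d s * (\<pi> s a * P a s s'))) = \<gamma> * (\<Sum>s\<in>UNIV. d s * M s s')"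
      by (simp add: M_def sum_distrib_left)
    finally show ?thesis using \<pi>1 by simp
  qed
  have "d = (\<lambda>_. 0)" by (rule contraction[OF M0 M1 g eq])
  hence "u s a = us s a" for s a using ud[of s a] by simp
  thus ?thesis by blast
qed


lemma deriv_b:
  fixes f :: "real \<Rightarrow> real"
  assumes df: "(f has_real_derivative f') (at t)" and fp: "0 < f t" and c: "0 < c"
  shows "((\<lambda>t. c * ln (c / f t) + f t - c) has_real_derivative ((1 - c / f t) * f')) (at t)"
proof -
  have d1: "((\<lambda>t. c / f t) has_real_derivative ((0 * f t - c * f') / (f t * f t))) (at t)"
    by (rule DERIV_divide[OF DERIV_const df]) (use fp in simp)
  have d2: "((\<lambda>t. ln (c / f t)) has_real_derivative (1 / (c / f t)) * ((0 * f t - c * f') / (f t * f t))) (at t)"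
    by (rule DERIV_chain2[OF DERIV_ln_divide d1]) (use fp c in simp)
  have d3: "((\<lambda>t. c * ln (c / f t) + f t - c) has_real_derivative
      (c * ((1 / (c / f t)) * ((0 * f t - c * f') / (f t * f t))) + f' - 0)) (at t)"
    by (rule DERIV_diff[OF DERIV_add[OF DERIV_cmult[OF d2] df] DERIV_const])
  have eq: "c * ((1 / (c / f t)) * ((0 * f t - c * f') / (f t * f t))) + f' - 0 = (1 - c / f t) * f'"
    using fp c by (simp add: field_simps)
  show ?thesis using d3 unfolding eq .
qed

lemma deriv_a:
  fixes f :: "real \<Rightarrow> real"
  assumes df: "(f has_real_derivative f') (at t)" 
  shows "((\<lambda>t. (f t - c)\<^sup>2) has_real_derivative (2 * (f t - c) * f')) (at t)"
proof -
  have d1: "((\<lambda>t. f t - c) has_real_derivative (f' - 0)) (at t)" by (rule DERIV_diff[OF df DERIV_const])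
  have d2: "((\<lambda>t. (f t - c)\<^sup>2) has_real_derivative (of_nat 2 * ((f' - 0) * (f t - c) ^ (2 - Suc 0)))) (at t)"
    by (rule DERIV_power[OF d1])
  have eq: "of_nat 2 * ((f' - 0) * (f t - c) ^ (2 - Suc 0)) = 2 * (f t - c) * f'" by simp
  show ?thesis using d2 unfolding eq .
qed
theorem lemma2p3:
  fixes P :: "'a::finite \<Rightarrow> 's::finite \<Rightarrow> 's \<Rightarrow> real"
    and r :: "'s \<Rightarrow> 'a \<Rightarrow> real"
    and \<gamma> \<tau> \<alpha> :: real
    and vs :: "'s \<Rightarrow> real" and us :: "'s \<Rightarrow> 'a \<Rightarrow> real"
    and J :: "real set"
    and vt :: "real \<Rightarrow> 's \<Rightarrow> real" and ut :: "real \<Rightarrow> 's \<Rightarrow> 'a \<Rightarrow> real"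
  assumes P_nonneg: "\<And>a s s'. 0 \<le> P a s s'"
    and P_sum: "\<And>a s. (\<Sum>s'\<in>UNIV. P a s s') = 1"
    and r_nonneg: "\<And>s a. 0 \<le> r s a"
    and gamma: "0 < \<gamma>" "\<gamma> < 1"
    and tau: "0 < \<tau>"
    and alpha: "0 < \<alpha>"
    and saddle: "is_saddle \<alpha> \<tau> \<gamma> P r vs us"
    and J: "open J" "is_interval J" "J \<noteq> {}"
    and u_pos: "\<And>t s a. t \<in> J \<Longrightarrow> 0 < ut t s a"
    and v_ode: "\<And>t s'. t \<in> J \<Longrightarrow>
        ((\<lambda>t. vt t s') has_real_derivative
          (- (vt t s' - 1 / \<alpha> * (\<Sum>s\<in>UNIV. \<Sum>a\<in>UNIV. Kmat \<gamma> P a s s' * ut t s a)))) (at t)"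
    and u_ode: "\<And>t s a. t \<in> J \<Longrightarrow>
        ((\<lambda>t. ut t s a) has_real_derivative
          (- ut t s a * (ln (ut t s a / utilde (ut t) s)
             - 1 / \<tau> * (r s a - (\<Sum>s'\<in>UNIV. Kmat \<gamma> P a s s' * vt t s'))))) (at t)"
  shows "(\<forall>t\<in>J. \<exists>D. ((\<lambda>t. Lyap \<alpha> \<tau> vs us (vt t) (ut t)) has_real_derivative D) (at t) \<and> D \<le> 0)
       \<and> ((\<forall>t\<in>J. ((\<lambda>t. Lyap \<alpha> \<tau> vs us (vt t) (ut t)) has_real_derivative 0) (at t))
            \<longrightarrow> (\<forall>t\<in>J. vt t = vs \<and> ut t = us))"
proof -
  have uspos: "\<And>s a. 0 < us s a" using saddle by (simp add: is_saddle_def)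
  note vstat = stat_v[OF saddle alpha]
  note ustat = stat_u[OF saddle tau]
  define dv where "dv t s' = - (vt t s' - 1 / \<alpha> * (\<Sum>s\<in>UNIV. \<Sum>a\<in>UNIV. Kmat \<gamma> P a s s' * ut t s a))" for t s'
  define du where "du t s a = - ut t s a * (ln (ut t s a / utilde (ut t) s)
             - 1 / \<tau> * (r s a - (\<Sum>s'\<in>UNIV. Kmat \<gamma> P a s s' * vt t s')))" for t s a
  have vd: "((\<lambda>t. vt t s') has_real_derivative dv t s') (at t)" if "t \<in> J" for t s'
    using v_ode[OF that] by (simp add: dv_def)
  have ud: "((\<lambda>t. ut t s a) has_real_derivative du t s a) (at t)" if "t \<in> J" for t s a
    using u_ode[OF that] by (simp add: du_def)
  define D where "D t = \<alpha> / 2 * (\<Sum>s'\<in>UNIV. 2 * (vt t s' - vs s') * dv t s')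
     + \<tau> * (\<Sum>s\<in>UNIV. \<Sum>a\<in>UNIV. (1 - us s a / ut t s a) * du t s a)" for t
  define G where "G t = (\<Sum>s\<in>UNIV. \<Sum>a\<in>UNIV. (ut t s a - us s a) * (ln (ut t s a / utilde (ut t) s) - ln (us s a / utilde us s)))" for t
  have Dform: "D t = - \<alpha> * (\<Sum>s\<in>UNIV. (vt t s - vs s)\<^sup>2) - \<tau> * G t" if "t \<in> J" for t
  proof -
    note X = Didentity[where K="Kmat \<gamma> P" and u="ut t" and v="vt t" and vs=vs and us=us and r=r and \<alpha>=\<alpha> and \<tau>=\<tau>,
      OF alpha tau u_pos[OF that] vstat ustat]
    have e1: "D t = \<alpha> / 2 * (\<Sum>s'\<in>UNIV. 2 * (vt t s' - vs s') * (- (vt t s' - 1 / \<alpha> * (\<Sum>s\<in>UNIV. \<Sum>a\<in>UNIV. Kmat \<gamma> P a s s' * ut t s a))))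
     + \<tau> * (\<Sum>s\<in>UNIV. \<Sum>a\<in>UNIV. (1 - us s a / ut t s a) * (- ut t s a * (ln (ut t s a / utilde (ut t) s)
             - 1 / \<tau> * (r s a - (\<Sum>s'\<in>UNIV. Kmat \<gamma> P a s s' * vt t s')))))"
      by (simp only: D_def dv_def du_def)
    show ?thesis unfolding e1 G_def by (rule X)
  qed
  have Gs: "0 \<le> (\<Sum>a\<in>UNIV. (ut t s a - us s a) * (ln (ut t s a / utilde (ut t) s) - ln (us s a / utilde us s)))"
    if "t \<in> J" for t s
    using kl_lemma(1)[of "ut t s" "us s"] u_pos[OF that] uspos by (simp add: utilde_def)
  have Gnn: "0 \<le> G t" if "t \<in> J" for t unfolding G_def by (rule sum_nonneg) (rule Gs[OF that])
  have sqnn: "0 \<le> (\<Sum>s\<in>UNIV. (vt t s - vs s)\<^sup>2)" for t by (intro sum_nonneg) auto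
  have Dle: "D t \<le> 0" if "t \<in> J" for t
  proof -
    have "0 \<le> \<alpha> * (\<Sum>s\<in>UNIV. (vt t s - vs s)\<^sup>2)" "0 \<le> \<tau> * G t"
      using sqnn[of t] Gnn[OF that] alpha tau by auto
    thus ?thesis using Dform[OF that] by linarith
  qed
  have eqf: "(\<lambda>t. Lyap \<alpha> \<tau> vs us (vt t) (ut t)) = (\<lambda>t. \<alpha> / 2 * (\<Sum>s\<in>UNIV. (vt t s - vs s)\<^sup>2)
       + \<tau> * (\<Sum>s\<in>UNIV. \<Sum>a\<in>UNIV. us s a * ln (us s a / ut t s a) + ut t s a - us s a))"
    by (simp add: Lyap_def power2_abs)
  have Lder: "((\<lambda>t. Lyap \<alpha> \<tau> vs us (vt t) (ut t)) has_real_derivative D t) (at t)" if "t \<in> J" for t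
  proof -
    have a: "((\<lambda>t. \<Sum>s\<in>UNIV. (vt t s - vs s)\<^sup>2) has_real_derivative (\<Sum>s\<in>UNIV. 2 * (vt t s - vs s) * dv t s)) (at t)"
      by (rule DERIV_sum) (rule deriv_a[OF vd[OF that]])
    have b: "((\<lambda>t. \<Sum>s\<in>UNIV. \<Sum>a\<in>UNIV. us s a * ln (us s a / ut t s a) + ut t s a - us s a)
        has_real_derivative (\<Sum>s\<in>UNIV. \<Sum>a\<in>UNIV. (1 - us s a / ut t s a) * du t s a)) (at t)"
      by (rule DERIV_sum, rule DERIV_sum, rule deriv_b[OF ud[OF that] u_pos[OF that] uspos])
    show ?thesis unfolding eqf D_def by (rule DERIV_add[OF DERIV_cmult[OF a] DERIV_cmult[OF b]])
  qed
  have part1: "\<forall>t\<in>J. \<exists>D. ((\<lambda>t. Lyap \<alpha> \<tau> vs us (vt t) (ut t)) has_real_derivative D) (at t) \<and> D \<le> 0"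
    using Lder Dle by blast
  have part2: "\<forall>t\<in>J. vt t = vs \<and> ut t = us"
    if H: "\<forall>t\<in>J. ((\<lambda>t. Lyap \<alpha> \<tau> vs us (vt t) (ut t)) has_real_derivative 0) (at t)"
  proof -
    have D0: "D t = 0" if "t \<in> J" for t using DERIV_unique[OF Lder[OF that]] H that by blast
    have both: "(\<Sum>s\<in>UNIV. (vt t s - vs s)\<^sup>2) = 0 \<and> G t = 0" if "t \<in> J" for t
    proof -
      have "\<alpha> * (\<Sum>s\<in>UNIV. (vt t s - vs s)\<^sup>2) + \<tau> * G t = 0" using Dform[OF that] D0[OF that] by simp
      moreover have "0 \<le> \<alpha> * (\<Sum>s\<in>UNIV. (vt t s - vs s)\<^sup>2)" "0 \<le> \<tau> * G t"
        using sqnn[of t] Gnn[OF that] alpha tau by auto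
      ultimately have "\<alpha> * (\<Sum>s\<in>UNIV. (vt t s - vs s)\<^sup>2) = 0" "\<tau> * G t = 0" by linarith+
      thus ?thesis using alpha tau by simp
    qed
    have vv: "vt t = vs" if "t \<in> J" for t
    proof -
      have "\<forall>s\<in>UNIV. (vt t s - vs s)\<^sup>2 = 0"
        using both[OF that] sum_nonneg_eq_0_iff[OF finite, of UNIV "\<lambda>s. (vt t s - vs s)\<^sup>2"] by simp
      thus ?thesis by auto
    qed
    have pol: "ut t s a / utilde (ut t) s = us s a / utilde us s" if "t \<in> J" for t s a
    proof -
      have Gz: "G t = 0" using both[OF that] by blast
      have X: "(\<Sum>a\<in>UNIV. (ut t s a - us s a) * (ln (ut t s a / utilde (ut t) s) - ln (us s a / utilde us s))) = 0"
        using Gz[unfolded G_def] sum_nonneg_eq_0_iff[OF finite, of UNIV "\<lambda>s. (\<Sum>a\<in>UNIV. (ut t s a - us s a) * (ln (ut t s a / utilde (ut t) s) - ln (us s a / utilde us s)))"]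
          Gs[OF that] by blast
      have "\<forall>a. ut t s a / (\<Sum>a\<in>UNIV. ut t s a) = us s a / (\<Sum>a\<in>UNIV. us s a)"
        by (rule kl_lemma(2)[of "ut t s" "us s"], rule u_pos[OF that], rule uspos, rule X[unfolded utilde_def])
      thus ?thesis by (simp add: utilde_def)
    qed
    show ?thesis
    proof
      fix t assume t: "t \<in> J"
      have kt: "(\<Sum>s\<in>UNIV. \<Sum>a\<in>UNIV. Kmat \<gamma> P a s s' * ut t s a) = (\<Sum>s\<in>UNIV. \<Sum>a\<in>UNIV. Kmat \<gamma> P a s s' * us s a)" for s'
      proof -
        have "((\<lambda>t. vt t s') has_real_derivative 0) (at t)"
          by (rule has_field_derivative_transform_within_open[OF DERIV_const[of "vs s'"] J(1) t]) (simp add: vv)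
        hence "dv t s' = 0" using DERIV_unique[OF vd[OF t]] by blast
        hence "\<alpha> * vs s' = (\<Sum>s\<in>UNIV. \<Sum>a\<in>UNIV. Kmat \<gamma> P a s s' * ut t s a)"
          using vv[OF t] alpha by (simp add: dv_def field_simps)
        thus ?thesis using vstat[of s'] by simp
      qed
      have "ut t = us"
        by (rule fixed[OF P_nonneg P_sum _ gamma(2) uspos u_pos[OF t] pol[OF t] kt]) (use gamma in simp)
      thus "vt t = vs \<and> ut t = us" using vv[OF t] by simp
    qed
  qed
  show ?thesis using part1 part2 by blast
qed

end
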